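(* Let $G$ be a strongly connected digraph with $N>2$ nodes in which all nodes run the Privacy-Preserving Push-Sum Algorithm described in the context. Let $\mathcal A\subset\mathcal V$ be a set of honest-but-curious nodes, $\mathcal L=\mathcal V\setminus\mathcal A$, and $i\in\mathcal L$. If $N_i^{out}\cup N_i^{in}\not\subseteq\mathcal A$, then the privacy of node $i$ is preserved against $\mathcal A$, i.e., for every $\kappa\in\mathbb N$ and every feasible information sequence $\mathcal I_{\mathcal A}(0:\kappa)$, $\mathrm{Diam}(\mathcal I_{\mathcal A}(0:\kappa))=\infty$.
   Context: Digraph conventions: $\mathcal V=\{1,\dots,N\}$, no self-loops; $(j,i)\in\mathcal E$ means node $i$ can send messages to node $j$. $N_i^{in}=\{j:(i,j)\in\mathcal E\}$, $N_i^{out}=\{j:(j,i)\in\mathcal E\}$. Strongly connected: a directed path exists from any node to any other node. Privacy-Preserving Push-Sum Algorithm (each node $i$ has a private real initial state $x_i(0)$; $M>0$ is a fixed constant). Initialization: node $i$ draws $x^\alpha_{i,1}(0)\sim U(-M,M)$ and sets $x^\beta_{i,1}(0)=2x_i(0)-x^\alpha_{i,1}(0)$, $x^\alpha_{i,2}(0)=0$, $x^\beta_{i,2}(0)=2$. Weights: at $k=0$, node $i$ draws the numbers $\{p_{ji}(0):j\in N_i^{out}\cup\{i\}\}$ and $\alpha_i(0)$ independently from $\mathcal N(0,M)$ and normalizes them so that $\sum_{j=1}^N p_{ji}(0)+\alpha_i(0)=1$; at each $k\ge1$, node $i$ draws $\{p_{ji}(k):j\in N_i^{out}\cup\{i\}\}$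 and $\alpha_i(k)$ independently from $U(0,1)$ and normalizes them so that $\sum_{j=1}^N p_{ji}(k)+\alpha_i(k)=1$; in all cases $p_{ji}(k)=0$ if $j\notin N_i^{out}\cup\{i\}$. State update, for $k\ge0$, $l=1,2$: node $i$ sends $p_{ji}(k)x^\alpha_{i,l}(k)$ to each $j\in N_i^{out}$ and updates $$x^\alpha_{i,l}(k+1)=\sum_{j\in N_i^{in}\cup\{i\}}p_{ij}(k)x^\alpha_{j,l}(k)+x^\beta_{i,l}(k),\qquad x^\beta_{i,l}(k+1)=\alpha_i(k)x^\alpha_{i,l}(k).$$ Node $i$'s estimated average is $\hat x^{ave}_i(k+1)=x^\alpha_{i,1}(k+1)/x^\alpha_{i,2}(k+1)$. The substate $x^\beta_{i,l}$ is never transmitted. Honest-but-curious nodes: nodes that follow the protocol, try to infer other nodes' private initial values from the data they receive, and may pool their data. For a set $\mathcal A$ of such nodes, the information available at time $k$ is $\mathcal I_{\mathcal A}(k)=\{\mathcal I_a(k):a\in\mathcal A\}$ with $$\mathcal I_a(k)=\{x^\alpha_{a,l}(k),x^\beta_{a,l}(k),p_{ja}(k),p_{ap}(k)x^\alpha_{p,l}(k): p\in N_a^{in},\ j\in\mathcal V,\ l=1,2\},$$ and $\mathcal I_{\mathcal A}(0:\kappa)=\bigcup_{0\le k\le\kappa}\mathcal I_{\mathcal A}(k)$. For a feasible $\mathcal I_{\mathcal A}(0:\kappa)$, $\Delta(\mathcal I_{\mathcal A}(0:\kappa),i)$ is the set of all values $x_i(0)=(x^\alpha_{i,1}(0)+x^\beta_{i,1}(0))/2$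 for which there exist initial substates $x^\alpha_{n,1}(0),x^\beta_{n,1}(0)$, $n\in\mathcal L$, and weights $p_{jn}(k),\alpha_n(k)$, $n\in\mathcal L$, $j\in\mathcal V$, $k=0,\dots,\kappa$ (satisfying the column normalization $\sum_j p_{jn}(k)+\alpha_n(k)=1$ and the sparsity pattern of the algorithm; at $k=0$ the weights may be arbitrary real numbers, as their generating distribution is Gaussian), such that the quantities of $\mathcal I_{\mathcal A}(0:\kappa)$ generated by the update rules (with $x^\alpha_{n,2}(0)=0$, $x^\beta_{n,2}(0)=2$) coincide with the given ones. $\mathrm{Diam}(\mathcal I_{\mathcal A}(0:\kappa))=\sup\{|x-x'|:x,x'\in\Delta(\mathcal I_{\mathcal A}(0:\kappa),i)\}$. The privacy of node $i\in\mathcal L$ is preserved against $\mathcal A$ if for every $\kappa\in\mathbb N$, $\mathrm{Diam}(\mathcal I_{\mathcal A}(0:\kappa))=\infty$ for every feasible $\mathcal I_{\mathcal A}(0:\kappa)$. *)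

theory Defs
  imports "HOL-Analysis.Analysis"
begin

text \<open>Digraph conventions: nodes are V = {1..N}; a pair (j,i) in E means that node i
  can send messages to node j.\<close>

definition N_in :: "(nat \<times> nat) set \<Rightarrow> nat \<Rightarrow> nat set" where
  "N_in E i = {j. (i, j) \<in> E}"

definition N_out :: "(nat \<times> nat) set \<Rightarrow> nat \<Rightarrow> nat set" where
  "N_out E i = {j. (j, i) \<in> E}"

definition strongly_connected :: "nat set \<Rightarrow> (nat \<times> nat) set \<Rightarrow> bool" where
  "strongly_connected V E \<longleftrightarrow> (\<forall>i\<in>V. \<forall>j\<in>V. i \<noteq> j \<longrightarrow> (i, j) \<in> E\<^sup>+)"

text \<open>Weights: p k j i is p_{ji}(k), al k i is alpha_i(k).
  At k = 0 arbitrary reals (Gaussian support); at k >= 1 positive on the allowed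
  pattern (normalised uniform(0,1) draws); always column-normalised and sparse.\<close>

definition valid_weights ::
  "nat set \<Rightarrow> (nat \<times> nat) set \<Rightarrow> (nat \<Rightarrow> nat \<Rightarrow> nat \<Rightarrow> real) \<Rightarrow> (nat \<Rightarrow> nat \<Rightarrow> real) \<Rightarrow> bool" where
  "valid_weights V E p al \<longleftrightarrow>
     (\<forall>k. \<forall>i\<in>V.
        (\<Sum>j\<in>V. p k j i) + al k i = 1
      \<and> (\<forall>j. j \<notin> N_out E i \<union> {i} \<longrightarrow> p k j i = 0)
      \<and> (k \<ge> 1 \<longrightarrow> al k i > 0 \<and> (\<forall>j\<in>N_out E i \<union> {i}. p k j i > 0)))"

fun traj :: "(nat \<times> nat) set \<Rightarrow> (nat \<Rightarrow> nat \<Rightarrow> nat \<Rightarrow> real) \<Rightarrow> (nat \<Rightarrow> nat \<Rightarrow> real)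
    \<Rightarrow> (nat \<Rightarrow> real) \<Rightarrow> (nat \<Rightarrow> real) \<Rightarrow> nat \<Rightarrow> (nat \<Rightarrow> real) \<times> (nat \<Rightarrow> real)" where
  "traj E p al a0 b0 0 = (a0, b0)"
| "traj E p al a0 b0 (Suc k) =
     (let xa = fst (traj E p al a0 b0 k); xb = snd (traj E p al a0 b0 k) in
      (\<lambda>i. (\<Sum>j\<in>N_in E i \<union> {i}. p k i j * xa j) + xb i, \<lambda>i. al k i * xa i))"

text \<open>x^alpha_{n,l}(k) and x^beta_{n,l}(k), l = 1,2; a0, b0 are the initial
  substates x^alpha_{n,1}(0), x^beta_{n,1}(0); for l = 2 they are 0 and 2.\<close>

definition xA :: "(nat \<times> nat) set \<Rightarrow> (nat \<Rightarrow> nat \<Rightarrow> nat \<Rightarrow> real) \<Rightarrow> (nat \<Rightarrow> nat \<Rightarrow> real)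
    \<Rightarrow> (nat \<Rightarrow> real) \<Rightarrow> (nat \<Rightarrow> real) \<Rightarrow> nat \<Rightarrow> nat \<Rightarrow> nat \<Rightarrow> real" where
  "xA E p al a0 b0 l k n =
     fst (traj E p al (if l = 1 then a0 else (\<lambda>_. 0)) (if l = 1 then b0 else (\<lambda>_. 2)) k) n"

definition xB :: "(nat \<times> nat) set \<Rightarrow> (nat \<Rightarrow> nat \<Rightarrow> nat \<Rightarrow> real) \<Rightarrow> (nat \<Rightarrow> nat \<Rightarrow> real)
    \<Rightarrow> (nat \<Rightarrow> real) \<Rightarrow> (nat \<Rightarrow> real) \<Rightarrow> nat \<Rightarrow> nat \<Rightarrow> nat \<Rightarrow> real" where
  "xB E p al a0 b0 l k n =
     snd (traj E p al (if l = 1 then a0 else (\<lambda>_. 0)) (if l = 1 then b0 else (\<lambda>_. 2)) k) n"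

definition same_info ::
  "nat set \<Rightarrow> (nat \<times> nat) set \<Rightarrow> nat set \<Rightarrow> nat \<Rightarrow>
   (nat \<Rightarrow> nat \<Rightarrow> nat \<Rightarrow> real) \<Rightarrow> (nat \<Rightarrow> nat \<Rightarrow> real) \<Rightarrow> (nat \<Rightarrow> real) \<Rightarrow> (nat \<Rightarrow> real) \<Rightarrow>
   (nat \<Rightarrow> nat \<Rightarrow> nat \<Rightarrow> real) \<Rightarrow> (nat \<Rightarrow> nat \<Rightarrow> real) \<Rightarrow> (nat \<Rightarrow> real) \<Rightarrow> (nat \<Rightarrow> real) \<Rightarrow> bool" where
  "same_info V E A \<kappa> p al a0 b0 p' al' a0' b0' \<longleftrightarrow>
     (\<forall>k\<le>\<kappa>. \<forall>a\<in>A. \<forall>l\<in>{1, 2}.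
        xA E p al a0 b0 l k a = xA E p' al' a0' b0' l k a
      \<and> xB E p al a0 b0 l k a = xB E p' al' a0' b0' l k a
      \<and> (\<forall>j\<in>V. p k j a = p' k j a)
      \<and> (\<forall>q\<in>N_in E a. p k a q * xA E p al a0 b0 l k q = p' k a q * xA E p' al' a0' b0' l k q))"

text \<open>Delta(I_A(0:kappa), i), where I_A(0:kappa) is the information generated by the
  execution (p, al, a0, b0).\<close>

definition Delta ::
  "nat set \<Rightarrow> (nat \<times> nat) set \<Rightarrow> nat set \<Rightarrow> nat \<Rightarrow> nat \<Rightarrow>
   (nat \<Rightarrow> nat \<Rightarrow> nat \<Rightarrow> real) \<Rightarrow> (nat \<Rightarrow> nat \<Rightarrow> real) \<Rightarrow> (nat \<Rightarrow> real) \<Rightarrow> (nat \<Rightarrow> real) \<Rightarrow> real set" where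
  "Delta V E A i \<kappa> p al a0 b0 =
     {(a0' i + b0' i) / 2 | p' al' a0' b0'.
        valid_weights V E p' al' \<and> same_info V E A \<kappa> p al a0 b0 p' al' a0' b0'}"

definition Diam :: "real set \<Rightarrow> ereal" where
  "Diam S = Sup {ereal \<bar>x - y\<bar> | x y. x \<in> S \<and> y \<in> S}"

end

theory Submission
  imports Defs
begin

definition Kc :: "nat set \<Rightarrow> (nat\<Rightarrow>nat\<Rightarrow>nat\<Rightarrow>real) \<Rightarrow> (nat\<Rightarrow>nat\<Rightarrow>real) \<Rightarrow> (nat\<Rightarrow>real) \<Rightarrow> nat \<Rightarrow> nat \<Rightarrow> real" where
  "Kc V p al a0 s r = (\<Sum>j\<in>V-{s,r}. p 0 j s * a0 s) + al 0 s * a0 s"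

definition pP where
  "pP V p al a0 s r \<theta> k j n = (if k = 0 \<and> n = s then
     (if j = s then 1 - \<theta> - Kc V p al a0 s r else if j = r then \<theta> else p 0 j s * a0 s) else p k j n)"

definition alP :: "(nat\<Rightarrow>nat\<Rightarrow>real) \<Rightarrow> (nat\<Rightarrow>real) \<Rightarrow> nat \<Rightarrow> nat \<Rightarrow> nat \<Rightarrow> real" where
  "alP al a0 s k n = (if k = 0 \<and> n = s then al 0 s * a0 s else al k n)"

definition bP where
  "bP V p al a0 b0 s r \<theta> n = b0 n - (pP V p al a0 s r \<theta> 0 n s - p 0 n s * a0 s)"

lemma traj_eq_from1:
  assumes "traj E p' al' a' b' 1 = traj E p al a b 1"
    and "\<And>k. k \<ge> 1 \<Longrightarrow> p' k = p k \<and> al' k = al k"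
    and "k \<ge> 1"
  shows "traj E p' al' a' b' k = traj E p al a b k"
  using assms(3)
proof (induction k rule: nat_induct_at_least)
  case base
  then show ?case using assms(1) by simp
next
  case (Suc n)
  then show ?case using assms(2)[of n] by (simp add: Let_def)
qed

lemma traj_l2_1: "traj E p al (\<lambda>_. 0) (\<lambda>_. 2) 1 = ((\<lambda>_. 2), (\<lambda>_. 0))"
  by (simp add: Let_def)

lemma fin_Nin: "E \<subseteq> {1..N} \<times> {1..N} \<Longrightarrow> finite (N_in E n)"
  unfolding N_in_def by (rule finite_subset[of _ "{1..N}"]) auto

lemma traj_l1_1:
  assumes E: "E \<subseteq> {1..N} \<times> {1..N}" and rs: "(r, s) \<in> E" "r \<noteq> s"
  shows "traj E (pP V p al a0 s r \<theta>) (alP al a0 s) (a0(s:=1)) (bP V p al a0 b0 s r \<theta>) 1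
       = traj E p al a0 b0 1"
proof -
  let ?p' = "pP V p al a0 s r \<theta>"
  let ?d = "\<lambda>n. ?p' 0 n s - p 0 n s * a0 s"
  have dz: "?d n = 0" if "n \<noteq> s" "n \<noteq> r" for n using that by (simp add: pP_def)
  have trm: "?p' 0 n j * (a0(s:=1)) j = p 0 n j * a0 j + (if j = s then ?d n else 0)" for n j
    by (cases "j = s") (auto simp: pP_def)
  have sumeq: "(\<Sum>j\<in>N_in E n \<union> {n}. ?p' 0 n j * (a0(s:=1)) j)
      = (\<Sum>j\<in>N_in E n \<union> {n}. p 0 n j * a0 j) + ?d n" for n
  proof -
    have fin: "finite (N_in E n \<union> {n})" using fin_Nin[OF E] by simp
    have "(\<Sum>j\<in>N_in E n \<union> {n}. ?p' 0 n j * (a0(s:=1)) j)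
       = (\<Sum>j\<in>N_in E n \<union> {n}. p 0 n j * a0 j) + (\<Sum>j\<in>N_in E n \<union> {n}. (if j = s then ?d n else 0))"
      unfolding trm by (rule sum.distrib)
    also have "(\<Sum>j\<in>N_in E n \<union> {n}. (if j = s then ?d n else 0)) = ?d n"
    proof (cases "s \<in> N_in E n \<union> {n}")
      case True then show ?thesis using fin by (simp add: sum.delta)
    next
      case False
      then have "n \<noteq> s" "n \<noteq> r" using rs by (auto simp: N_in_def)
      then have d0: "?d n = 0" using dz by blast
      then have "\<And>j. (if j = s then ?d n else 0) = 0" by simp
      then show ?thesis by (simp only: sum.neutral_const d0)
    qed
    finally show ?thesis .
  qed
  have e1: "(\<lambda>n. (\<Sum>j\<in>N_in E n \<union> {n}. ?p' 0 n j * (a0(s:=1)) j) + bP V p al a0 b0 s r \<theta> n)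
      = (\<lambda>n. (\<Sum>j\<in>N_in E n \<union> {n}. p 0 n j * a0 j) + b0 n)"
    by (rule ext, subst sumeq) (simp add: bP_def)
  have e2: "(\<lambda>n. alP al a0 s 0 n * (a0(s:=1)) n) = (\<lambda>n. al 0 n * a0 n)"
    by (auto simp: alP_def)
  show ?thesis
    using e1 e2 by (simp only: One_nat_def traj.simps Let_def fst_conv snd_conv)
qed

lemma valid_pert:
  assumes V: "valid_weights {1..N} E p al"
    and E: "E \<subseteq> {1..N} \<times> {1..N}" and rs: "(r, s) \<in> E" "r \<noteq> s"
  shows "valid_weights {1..N} E (pP {1..N} p al a0 s r \<theta>) (alP al a0 s)"
  unfolding valid_weights_def
proof (intro allI ballI)
  fix k n assume n: "n \<in> {1..N}"
  let ?V = "{1..N}::nat set"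
  let ?p' = "pP ?V p al a0 s r \<theta>"
  have sV: "s \<in> ?V" and rV: "r \<in> ?V" using rs E by auto
  have rout: "r \<in> N_out E s" using rs by (simp add: N_out_def)
  show "(\<Sum>j\<in>?V. ?p' k j n) + alP al a0 s k n = 1
      \<and> (\<forall>j. j \<notin> N_out E n \<union> {n} \<longrightarrow> ?p' k j n = 0)
      \<and> (k \<ge> 1 \<longrightarrow> alP al a0 s k n > 0 \<and> (\<forall>j\<in>N_out E n \<union> {n}. ?p' k j n > 0))"
  proof (cases "k = 0 \<and> n = s")
    case False
    then have "\<And>j. ?p' k j n = p k j n" "alP al a0 s k n = al k n" by (auto simp: pP_def alP_def)
    then show ?thesis using V n unfolding valid_weights_def by simp
  next
    case True
    then have k0: "k = 0" and ns: "n = s" by auto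
    have sp: "\<forall>j. j \<notin> N_out E s \<union> {s} \<longrightarrow> p 0 j s = 0" using V sV unfolding valid_weights_def by blast
    have "(\<Sum>j\<in>?V. ?p' 0 j s) = ?p' 0 s s + (\<Sum>j\<in>?V-{s}. ?p' 0 j s)"
      using sV by (simp add: sum.remove)
    also have "(\<Sum>j\<in>?V-{s}. ?p' 0 j s) = ?p' 0 r s + (\<Sum>j\<in>?V-{s}-{r}. ?p' 0 j s)"
      using rV rs by (intro sum.remove) auto
    also have "(\<Sum>j\<in>?V-{s}-{r}. ?p' 0 j s) = (\<Sum>j\<in>?V-{s,r}. p 0 j s * a0 s)"
      by (intro sum.cong) (auto simp: pP_def)
    finally have "(\<Sum>j\<in>?V. ?p' 0 j s) + alP al a0 s 0 s = 1"
      using rs by (simp add: pP_def alP_def Kc_def)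
    moreover have "\<forall>j. j \<notin> N_out E s \<union> {s} \<longrightarrow> ?p' 0 j s = 0"
      using sp rout by (auto simp: pP_def)
    ultimately show ?thesis using k0 ns by simp
  qed
qed

lemma info_pert:
  assumes E: "E \<subseteq> {1..N} \<times> {1..N}" and rs: "(r, s) \<in> E" "r \<noteq> s"
    and sA: "s \<notin> A" and rA: "r \<notin> A"
  shows "same_info V E A \<kappa> p al a0 b0 (pP V' p al a0 s r \<theta>) (alP al a0 s) (a0(s:=1)) (bP V' p al a0 b0 s r \<theta>)"
  unfolding same_info_def
proof (intro allI impI ballI)
  fix k a l assume k: "k \<le> \<kappa>" and a: "a \<in> A" and l: "l \<in> {1::nat, 2}"
  let ?p' = "pP V' p al a0 s r \<theta>"
  let ?al' = "alP al a0 s" let ?a' = "a0(s:=1)" let ?b' = "bP V' p al a0 b0 s r \<theta>"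
  have as: "a \<noteq> s" "a \<noteq> r" using a sA rA by auto
  have wk: "?p' k = p k \<and> ?al' k = al k" if "k \<ge> 1" for k
    using that by (auto simp: pP_def alP_def fun_eq_iff)
  have col: "?p' k j a = p k j a" for j using as by (simp add: pP_def)
  show "xA E p al a0 b0 l k a = xA E ?p' ?al' ?a' ?b' l k a \<and>
        xB E p al a0 b0 l k a = xB E ?p' ?al' ?a' ?b' l k a \<and>
        (\<forall>j\<in>V. p k j a = ?p' k j a) \<and>
        (\<forall>q\<in>N_in E a. p k a q * xA E p al a0 b0 l k q = ?p' k a q * xA E ?p' ?al' ?a' ?b' l k q)"
  proof (cases "k = 0")
    case True
    have prod: "p 0 a q * a0 q = ?p' 0 a q * ?a' q" for q
      using as by (cases "q = s") (auto simp: pP_def)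
    have d: "?b' a = b0 a" using as by (simp add: bP_def pP_def)
    have x0: "xA E p al a0 b0 l 0 a = xA E ?p' ?al' ?a' ?b' l 0 a"
      "xB E p al a0 b0 l 0 a = xB E ?p' ?al' ?a' ?b' l 0 a"
      using as d by (simp_all add: xA_def xB_def)
    have x1: "p 0 a q * xA E p al a0 b0 l 0 q = ?p' 0 a q * xA E ?p' ?al' ?a' ?b' l 0 q" for q
    proof (cases "l = 1")
      case True then show ?thesis using prod[of q] by (simp add: xA_def)
    next
      case False then show ?thesis by (simp add: xA_def)
    qed
    show ?thesis using True x0 x1 col by simp
  next
    case False
    have tr: "traj E ?p' ?al' (if l = 1 then ?a' else (\<lambda>_. 0)) (if l = 1 then ?b' else (\<lambda>_. 2)) k
            = traj E p al (if l = 1 then a0 else (\<lambda>_. 0)) (if l = 1 then b0 else (\<lambda>_. 2)) k"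
    proof (rule traj_eq_from1[OF _ wk])
      show "traj E ?p' ?al' (if l = 1 then ?a' else (\<lambda>_. 0)) (if l = 1 then ?b' else (\<lambda>_. 2)) 1
            = traj E p al (if l = 1 then a0 else (\<lambda>_. 0)) (if l = 1 then b0 else (\<lambda>_. 2)) 1"
        using traj_l1_1[OF E rs] traj_l2_1 by simp
      show "1 \<le> k" using False by simp
    qed
    have "xA E p al a0 b0 l k = xA E ?p' ?al' ?a' ?b' l k" "xB E p al a0 b0 l k = xB E ?p' ?al' ?a' ?b' l k"
      unfolding xA_def xB_def using tr by (auto intro!: ext)
    moreover have "?p' k = p k" using wk False by simp
    ultimately show ?thesis by simp
  qed
qed

lemma Diam_UNIV: "Diam (UNIV::real set) = \<infinity>"
proof -
  have "Sup {ereal \<bar>x - y\<bar> | x y. x \<in> (UNIV::real set) \<and> y \<in> UNIV} = top"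
  proof (subst Sup_eq_top_iff, intro allI impI)
    fix z :: ereal assume "z < top"
    then have c: "z < ereal (case z of ereal r \<Rightarrow> r + 1 | _ \<Rightarrow> 0)" by (cases z) auto
    define c where "c = (case z of ereal r \<Rightarrow> r + 1 | _ \<Rightarrow> 0)"
    have c: "z < ereal c" using c by (simp add: c_def)
    have "ereal \<bar>(\<bar>c\<bar> + 1) - 0\<bar> \<in> {ereal \<bar>x - y\<bar> | x y. x \<in> (UNIV::real set) \<and> y \<in> UNIV}" by blast
    moreover have "z < ereal \<bar>(\<bar>c\<bar> + 1) - 0\<bar>" 
    proof -
      have "ereal c < ereal \<bar>(\<bar>c\<bar> + 1) - 0\<bar>" by simp
      then show ?thesis using c by (rule order.strict_trans[rotated])
    qed
    ultimately show "\<exists>i\<in>{ereal \<bar>x - y\<bar> | x y. x \<in> (UNIV::real set) \<and> y \<in> UNIV}. z < i" by blast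
  qed
  then show ?thesis unfolding Diam_def top_ereal_def .
qed

theorem theorem2:
  fixes N :: nat and E :: "(nat \<times> nat) set" and A :: "nat set" and i :: nat and M :: real
  assumes "N > 2"
    and "E \<subseteq> {1..N} \<times> {1..N}"
    and "\<forall>j. (j, j) \<notin> E"
    and "strongly_connected {1..N} E"
    and "M > 0"
    and "A \<subset> {1..N}"
    and "i \<in> {1..N} - A"
    and "\<not> (N_out E i \<union> N_in E i \<subseteq> A)"
  shows "\<forall>\<kappa> p al a0 b0.
           valid_weights {1..N} E p al \<and> (\<forall>n\<in>{1..N}. a0 n \<in> {-M<..<M})
           \<longrightarrow> Diam (Delta {1..N} E A i \<kappa> p al a0 b0) = \<infinity>"
proof (intro allI impI)
  fix \<kappa> p al a0 b0
  assume H: "valid_weights {1..N} E p al \<and> (\<forall>n\<in>{1..N}. a0 n \<in> {-M<..<M})"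
  then have V: "valid_weights {1..N} E p al" by blast
  let ?V = "{1..N}::nat set"
  obtain m where m: "m \<in> N_out E i \<union> N_in E i" "m \<notin> A" using assms(8) by blast
  have iA: "i \<notin> A" using assms(7) by blast
  obtain s r where rs: "(r, s) \<in> E" "r \<noteq> s" and sA: "s \<notin> A" and rA: "r \<notin> A" and isr: "i = s \<or> i = r"
  proof (cases "m \<in> N_out E i")
    case True
    then have "(m, i) \<in> E" by (simp add: N_out_def)
    then show ?thesis using that[of m i] m iA assms(3) by metis
  next
    case False
    then have "(i, m) \<in> E" using m by (simp add: N_in_def)
    then show ?thesis using that[of i m] m iA assms(3) by metis
  qed
  have "Delta ?V E A i \<kappa> p al a0 b0 = UNIV"
  proof (intro set_eqI iffI)
    fix T :: real assume "T \<in> UNIV"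
    define K where "K = Kc ?V p al a0 s r"
    define \<theta> where "\<theta> = (if i = s then 2*T - b0 s - K - p 0 s s * a0 s
                            else a0 r + b0 r + p 0 r s * a0 s - 2*T)"
    have val: "T = ((a0(s:=1)) i + bP ?V p al a0 b0 s r \<theta> i) / 2"
    proof (cases "i = s")
      case True then show ?thesis by (simp add: \<theta>_def bP_def pP_def K_def)
    next
      case False then have "i = r" using isr by simp
      then show ?thesis using False rs by (simp add: \<theta>_def bP_def pP_def)
    qed
    show "T \<in> Delta ?V E A i \<kappa> p al a0 b0"
      unfolding Delta_def
      using val valid_pert[OF V assms(2) rs] info_pert[OF assms(2) rs sA rA] by blast
  qed simp
  then show "Diam (Delta ?V E A i \<kappa> p al a0 b0) = \<infinity>" using Diam_UNIV by simp
qed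

end
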